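(* Let $\lambda\in\mathbb{C}$, let $(p_l)_{l\in\mathbb{Z}},(q_m)_{m\in\mathbb{Z}}$ be complex sequences, and let $u,v:\mathbb{Z}^2\to\mathbb{C}$ satisfy, for all $(l,m)\in\mathbb{Z}^2$ (with all denominators nonzero), \[ \widetilde{\overline u}-u-\frac{q_{m+1}-p_l}{\widetilde u}+\frac{q_m-p_{l+1}}{\overline u}=0,\qquad u-\widetilde{\overline v}-\frac{q_m-p_{l+1}}{\overline u}+\frac{\lambda-p_l}{\widetilde v}=0, \] \[ (u-v)\Big(\frac{q_m-p_l}{u}+\widetilde v\Big)-q_m+\lambda=0,\qquad \frac{q_m-p_l}{u}-\frac{\lambda-p_l}{v}-\overline u+\overline v=0. \] Then $v$ satisfies, for all $(l,m)$, \[ \begin{aligned} &q_m\big(v\overline v-\widetilde v\widetilde{\overline v}\big)^2+\big(v-\widetilde{\overline v}\big)\big(\overline v-\widetilde v\big)\big(\lambda-v\overline v\big)\big(\lambda-\widetilde v\widetilde{\overline v}\big) +\big(p_{l+1}v-p_l\widetilde{\overline v}\big)\big(p_l\overline v-p_{l+1}\widetilde v\big)\\ &\quad-(p_l+p_{l+1})\big(\lambda v\overline v+\lambda\widetilde v\widetilde{\overline v}-2v\overline v\widetilde v\widetilde{\overline v}\big) +\big(p_{l+1}v\widetilde v+p_l\overline v\widetilde{\overline v}\big)\big(2\lambda-v\overline v-\widetilde v\widetilde{\overline v}\big)=0. \end{aligned} \]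
   Context: Shift notation: for $f:\mathbb{Z}^2\to\mathbb{C}$, $f=f_{l,m}$, $\overline f=f_{l+1,m}$, $\widetilde f=f_{l,m+1}$, $\widetilde{\overline f}=f_{l+1,m+1}$; $p_l$ and $q_m$ are parameters depending only on $l$ and only on $m$ respectively. *)

theory Defs
  imports Complex_Main
begin

end

theory Submission
  imports Defs
begin

lemma key:
  fixes u ub v vb vt vh lam p P q :: complex
  assumes nz: "u \<noteq> 0" "ub \<noteq> 0" "v \<noteq> 0" "vb \<noteq> 0" "vt \<noteq> 0"
    and e2: "u - vh - (q - P) / ub + (lam - p) / vt = 0"
    and e3: "(u - v) * ((q - p) / u + vt) - q + lam = 0"
    and e3b: "(ub - vb) * ((q - P) / ub + vh) - q + lam = 0"
    and e4: "(q - p) / u - (lam - p) / v - ub + vb = 0"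
  shows "q * (v * vb - vt * vh)^2
    + (v - vh) * (vb - vt) * (lam - v * vb) * (lam - vt * vh)
    + (P * v - p * vh) * (p * vb - P * vt)
    - (p + P) * (lam * v * vb + lam * vt * vh - 2 * v * vb * vt * vh)
    + (P * v * vt + p * vb * vh) * (2 * lam - v * vb - vt * vh) = 0"
proof -
  have a: "vt*u^2 + (lam-p-v*vt)*u - v*(q-p) = 0"
  proof -
    have "u * ((u - v) * ((q - p) / u + vt) - q + lam) = vt*u^2 + (lam-p-v*vt)*u - v*(q-p)"
      using nz by (simp add: field_simps power2_eq_square)
    thus ?thesis using e3 by simp
  qed
  have b: "vh*ub^2 + (lam-P-vb*vh)*ub - vb*(q-P) = 0"
  proof -
    have "ub * ((ub - vb) * ((q - P) / ub + vh) - q + lam) = vh*ub^2 + (lam-P-vb*vh)*ub - vb*(q-P)"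
      using nz by (simp add: field_simps power2_eq_square)
    thus ?thesis using e3b by simp
  qed
  have e4': "(q-p)*v - (lam-p)*u - ub*u*v + vb*u*v = 0"
  proof -
    have "u*v*((q - p) / u - (lam - p) / v - ub + vb) = (q-p)*v - (lam-p)*u - ub*u*v + vb*u*v"
      using nz by (simp add: field_simps)
    thus ?thesis using e4 by simp
  qed
  have e2': "u*ub*vt - vh*ub*vt - (q-P)*vt + (lam-p)*ub = 0"
  proof -
    have "ub*vt*(u - vh - (q - P) / ub + (lam - p) / vt) = u*ub*vt - vh*ub*vt - (q-P)*vt + (lam-p)*ub"
      using nz by (simp add: field_simps)
    thus ?thesis using e2 by simp
  qed
  have "u*(vt*u - v*vt - ub*v + vb*v) = 0" using a e4' by algebra
  hence A: "vt*u - v*vt - ub*v + vb*v = 0" using nz by simp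
  have "ub*(u*vt*vb - vt*vh*ub - vt*(lam-P) + (lam-p)*vb) = 0" using b e2' by algebra
  hence B: "u*vt*vb - vt*vh*ub - vt*(lam-P) + (lam-p)*vb = 0" using nz by simp
  have C: "u*vt*(v*vb - vt*vh) = v*(vt*vh*vb - vt^2*vh + vt*(lam-P) - (lam-p)*vb)"
    using A B by algebra
  define D where "D = v*vb - vt*vh"
  define M where "M = vt*vh*vb - vt^2*vh + vt*(lam-P) - (lam-p)*vb"
  have C': "u*vt*D = v*M" using C unfolding D_def M_def .
  have "v * (v*M^2 + (lam-p-v*vt)*D*M - (q-p)*vt*D^2) = 0" using a C' by algebra
  hence T: "v*M^2 + (lam-p-v*vt)*D*M - (q-p)*vt*D^2 = 0" using nz by simp
  have "vt * (q * (v * vb - vt * vh)^2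
    + (v - vh) * (vb - vt) * (lam - v * vb) * (lam - vt * vh)
    + (P * v - p * vh) * (p * vb - P * vt)
    - (p + P) * (lam * v * vb + lam * vt * vh - 2 * v * vb * vt * vh)
    + (P * v * vt + p * vb * vh) * (2 * lam - v * vb - vt * vh)) = 0"
    using T unfolding D_def M_def by algebra
  thus ?thesis using nz by simp
qed

theorem mainTheorem8:
  fixes lam :: complex and p q :: "int \<Rightarrow> complex" and u v :: "int \<Rightarrow> int \<Rightarrow> complex"
  assumes u_nz: "\<And>l m. u l m \<noteq> 0"
    and v_nz: "\<And>l m. v l m \<noteq> 0"
    and e1: "\<And>l m. u (l+1) (m+1) - u l m - (q (m+1) - p l) / u l (m+1)
                 + (q m - p (l+1)) / u (l+1) m = 0"
    and e2: "\<And>l m. u l m - v (l+1) (m+1) - (q m - p (l+1)) / u (l+1) m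
                 + (lam - p l) / v l (m+1) = 0"
    and e3: "\<And>l m. (u l m - v l m) * ((q m - p l) / u l m + v l (m+1)) - q m + lam = 0"
    and e4: "\<And>l m. (q m - p l) / u l m - (lam - p l) / v l m - u (l+1) m + v (l+1) m = 0"
  shows "\<forall>l m.
    q m * (v l m * v (l+1) m - v l (m+1) * v (l+1) (m+1))^2
    + (v l m - v (l+1) (m+1)) * (v (l+1) m - v l (m+1))
      * (lam - v l m * v (l+1) m) * (lam - v l (m+1) * v (l+1) (m+1))
    + (p (l+1) * v l m - p l * v (l+1) (m+1)) * (p l * v (l+1) m - p (l+1) * v l (m+1))
    - (p l + p (l+1)) * (lam * v l m * v (l+1) m + lam * v l (m+1) * v (l+1) (m+1)
        - 2 * v l m * v (l+1) m * v l (m+1) * v (l+1) (m+1))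
    + (p (l+1) * v l m * v l (m+1) + p l * v (l+1) m * v (l+1) (m+1))
      * (2 * lam - v l m * v (l+1) m - v l (m+1) * v (l+1) (m+1)) = 0"
  proof (intro allI)
  fix l m
  show "q m * (v l m * v (l+1) m - v l (m+1) * v (l+1) (m+1))^2
    + (v l m - v (l+1) (m+1)) * (v (l+1) m - v l (m+1))
      * (lam - v l m * v (l+1) m) * (lam - v l (m+1) * v (l+1) (m+1))
    + (p (l+1) * v l m - p l * v (l+1) (m+1)) * (p l * v (l+1) m - p (l+1) * v l (m+1))
    - (p l + p (l+1)) * (lam * v l m * v (l+1) m + lam * v l (m+1) * v (l+1) (m+1)
        - 2 * v l m * v (l+1) m * v l (m+1) * v (l+1) (m+1))
    + (p (l+1) * v l m * v l (m+1) + p l * v (l+1) m * v (l+1) (m+1))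
      * (2 * lam - v l m * v (l+1) m - v l (m+1) * v (l+1) (m+1)) = 0"
    by (rule key[OF u_nz u_nz v_nz v_nz v_nz e2[where l=l and m=m] e3[where l=l and m=m] e3[where l="l+1" and m=m] e4[where l=l and m=m]])
qed

end
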